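(* Let $1 \le s \le r$ be fixed integers, let $\alpha \in (0,1)$ be fixed, and let $n \ge r$. Let $H_1, H_2, \ldots$ be independent, each uniformly distributed over the $r$-element subsets of $[n] = \{1, \ldots, n\}$. An $s$-element subset $S \subseteq [n]$ is said to be collected by time $k$ if $S \subseteq H_t$ for some $t \le k$. Let $T^{(r,s)}_\alpha$ be the smallest $k$ such that at least $(1-\alpha)\binom{n}{s}$ distinct $s$-element subsets of $[n]$ have been collected by time $k$. Then, as $n \to \infty$, \[ \mathbb{E}\, T^{(r,s)}_\alpha = \frac{\binom{n}{s}\log\left(\frac{1}{\alpha}\right)}{\binom{r}{s}}\,(1+o(1)). \]
   Context: In each round $t$ one draws $r$ distinct coupons uniformly at random (without replacement) from $[n]$, independently across rounds; all $s$-subsets of the drawn $r$-set are marked as collected. *)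

theory Defs
  imports "HOL-Probability.Probability"
begin

definition round_pmf :: "nat \<Rightarrow> nat \<Rightarrow> nat set pmf" where
  "round_pmf n r = pmf_of_set {H. H \<subseteq> {1..n} \<and> card H = r}"

text \<open>The probability space of the i.i.d. sequence H_1, H_2, ... (stream index t
  corresponds to round t+1).\<close>
definition rounds_space :: "nat \<Rightarrow> nat \<Rightarrow> nat set stream measure" where
  "rounds_space n r = stream_space (measure_pmf (round_pmf n r))"

definition collected :: "nat \<Rightarrow> nat \<Rightarrow> nat set stream \<Rightarrow> nat \<Rightarrow> nat set set" where
  "collected n s \<omega> k = {S. S \<subseteq> {1..n} \<and> card S = s \<and> (\<exists>t<k. S \<subseteq> \<omega> !! t)}"

definition T_alpha :: "nat \<Rightarrow> nat \<Rightarrow> real \<Rightarrow> nat set stream \<Rightarrow> enat" where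
  "T_alpha n s \<alpha> \<omega> =
     (if \<exists>k. real (card (collected n s \<omega> k)) \<ge> (1 - \<alpha>) * real (n choose s)
      then enat (LEAST k. real (card (collected n s \<omega> k)) \<ge> (1 - \<alpha>) * real (n choose s))
      else \<infinity>)"

definition expected_T :: "nat \<Rightarrow> nat \<Rightarrow> nat \<Rightarrow> real \<Rightarrow> ennreal" where
  "expected_T n r s \<alpha> = (\<integral>\<^sup>+ \<omega>. ennreal_of_enat (T_alpha n s \<alpha> \<omega>) \<partial>rounds_space n r)"

end

theory Submission
  imports Defs
begin


definition Om :: "nat \<Rightarrow> nat \<Rightarrow> nat set set" where
  "Om n r = {H. H \<subseteq> {1..n} \<and> card H = r}"

lemma Om_finite: "finite (Om n r)"
  unfolding Om_def by (rule finite_subset[of _ "Pow {1..n}"]) auto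

lemma Om_card: "card (Om n r) = n choose r"
  unfolding Om_def using n_subsets[of "{1..n}" r] by simp

lemma Om_ne: "r \<le> n \<Longrightarrow> Om n r \<noteq> {}"
  using Om_card[of n r] by (auto simp: zero_less_binomial_iff)

lemma card_super:
  assumes S: "S \<subseteq> {1..n}" "card S = s" and sr: "s \<le> r"
  shows "card {H \<in> Om n r. S \<subseteq> H} = (n - s) choose (r - s)"
proof -
  have fS: "finite S" using S(1) by (rule finite_subset) simp
  let ?K = "{K. K \<subseteq> {1..n} - S \<and> card K = r - s}"
  have eq: "{H \<in> Om n r. S \<subseteq> H} = (\<lambda>K. K \<union> S) ` ?K"
  proof
    show "{H \<in> Om n r. S \<subseteq> H} \<subseteq> (\<lambda>K. K \<union> S) ` ?K"
    proof
      fix H assume H: "H \<in> {H \<in> Om n r. S \<subseteq> H}"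
      then have H1: "H \<subseteq> {1..n}" by (simp add: Om_def)
      then have fH: "finite H" by (rule finite_subset) simp
      have "card (H - S) = r - s" using H S fH fS unfolding Om_def by (simp add: card_Diff_subset)
      moreover have "H = (H - S) \<union> S" using H by auto
      moreover have "H - S \<subseteq> {1..n} - S" using H1 by blast
      ultimately show "H \<in> (\<lambda>K. K \<union> S) ` ?K" by (intro image_eqI[of _ _ "H - S"]) auto
    qed
  next
    show "(\<lambda>K. K \<union> S) ` ?K \<subseteq> {H \<in> Om n r. S \<subseteq> H}"
    proof
      fix H assume "H \<in> (\<lambda>K. K \<union> S) ` ?K"
      then obtain K where K: "K \<subseteq> {1..n} - S" "card K = r - s" and HK: "H = K \<union> S" by blast
      have fK: "finite K" using K(1) by (rule finite_subset) simp
      have "card (K \<union> S) = card K + card S"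
        using K fK fS by (intro card_Un_disjoint) auto
      then have "card H = r" using HK K S sr by simp
      then show "H \<in> {H \<in> Om n r. S \<subseteq> H}" using HK K S unfolding Om_def by auto
    qed
  qed
  have inj: "inj_on (\<lambda>K. K \<union> S) ?K"
    by (rule inj_onI) blast
  have "card {H \<in> Om n r. S \<subseteq> H} = card ?K"
    unfolding eq by (rule card_image[OF inj])
  also have "\<dots> = card ({1..n} - S) choose (r - s)"
    by (rule n_subsets) simp
  also have "card ({1..n} - S) = n - s"
    using S fS by (simp add: card_Diff_subset)
  finally show ?thesis .
qed

lemma card_sub:
  assumes "H \<in> Om n r"
  shows "card {S. S \<subseteq> {1..n} \<and> card S = s \<and> S \<subseteq> H} = r choose s"
proof -
  have "{S. S \<subseteq> {1..n} \<and> card S = s \<and> S \<subseteq> H} = {S. S \<subseteq> H \<and> card S = s}"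
    using assms by (auto simp: Om_def)
  moreover have "finite H" using assms by (intro finite_subset[of H "{1..n}"]) (auto simp: Om_def)
  ultimately show ?thesis using n_subsets[of H s] assms by (simp add: Om_def)
qed

lemma prob_round:
  assumes "r \<le> n"
  shows "measure_pmf.prob (round_pmf n r) {H. P H} = (\<Sum>H\<in>Om n r. if P H then 1 else 0) / real (n choose r)"
proof -
  have "measure_pmf.prob (round_pmf n r) {H. P H} = real (card (Om n r \<inter> {H. P H})) / real (card (Om n r))"
    unfolding round_pmf_def Om_def[symmetric]
    by (rule measure_pmf_of_set[OF Om_ne[OF assms] Om_finite])
  also have "real (card (Om n r \<inter> {H. P H})) = (\<Sum>H\<in>Om n r. if P H then 1 else 0)"
  proof -
    have "Om n r \<inter> {H. P H} = {H \<in> Om n r. P H}" by auto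
    then have "real (card (Om n r \<inter> {H. P H})) = (\<Sum>H\<in>{H \<in> Om n r. P H}. 1)" by simp
    also have "\<dots> = (\<Sum>H\<in>Om n r. if P H then 1 else 0)"
      by (rule sum.inter_filter[OF Om_finite])
    finally show ?thesis .
  qed
  finally show ?thesis by (simp add: Om_card)
qed




definition Ss :: "nat \<Rightarrow> nat \<Rightarrow> nat set set" where
  "Ss n s = {S. S \<subseteq> {1..n} \<and> card S = s}"

lemma Ss_finite: "finite (Ss n s)"
  unfolding Ss_def by (rule finite_subset[of _ "Pow {1..n}"]) auto

lemma Ss_card: "card (Ss n s) = n choose s"
  unfolding Ss_def using n_subsets[of "{1..n}" s] by simp

definition pp :: "nat \<Rightarrow> nat \<Rightarrow> nat \<Rightarrow> real" where
  "pp n r s = real (r choose s) / real (n choose s)"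

lemma sum_if_card: "finite A \<Longrightarrow> (\<Sum>x\<in>A. if P x then 1 else 0 :: real) = real (card {x\<in>A. P x})"
  by (simp add: sum.inter_filter[symmetric])

context
  fixes n r s :: nat
  assumes sr: "s \<le> r" and rn: "r \<le> n"
begin

lemma prob_in:
  assumes "S \<in> Ss n s"
  shows "measure_pmf.prob (round_pmf n r) {H. S \<subseteq> H} = pp n r s"
proof -
  have c: "card {H \<in> Om n r. S \<subseteq> H} = (n - s) choose (r - s)"
    using assms sr by (intro card_super) (auto simp: Ss_def)
  have "(\<Sum>H\<in>Om n r. if S \<subseteq> H then 1 else 0 :: real) = real (card {H \<in> Om n r. S \<subseteq> H})"
    by (rule sum_if_card[OF Om_finite])
  then have "measure_pmf.prob (round_pmf n r) {H. S \<subseteq> H} = real ((n - s) choose (r - s)) / real (n choose r)"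
    using prob_round[OF rn, of "\<lambda>H. S \<subseteq> H"] c by simp
  also have "\<dots> = pp n r s"
  proof -
    have m: "(n choose r) * (r choose s) = (n choose s) * ((n - s) choose (r - s))"
      using choose_mult[OF sr rn] .
    have "real (n choose r) > 0" "real (n choose s) > 0" using sr rn by auto
    then show ?thesis unfolding pp_def using m
      by (simp add: field_simps) (metis of_nat_mult mult.commute)
  qed
  finally show ?thesis .
qed

lemma prob_notin:
  assumes "S \<in> Ss n s"
  shows "measure_pmf.prob (round_pmf n r) {H. \<not> S \<subseteq> H} = 1 - pp n r s"
proof -
  have "{H. \<not> S \<subseteq> H} = space (measure_pmf (round_pmf n r)) - {H. S \<subseteq> H}" by auto
  moreover have "measure_pmf.prob (round_pmf n r) (space (measure_pmf (round_pmf n r)) - {H. S \<subseteq> H})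
     = 1 - measure_pmf.prob (round_pmf n r) {H. S \<subseteq> H}"
    by (rule measure_pmf.prob_compl) simp
  ultimately show ?thesis using prob_in[OF assms] by simp
qed

lemma prob_both_not:
  assumes "S \<in> Ss n s" "S' \<in> Ss n s"
  shows "measure_pmf.prob (round_pmf n r) {H. \<not> S \<subseteq> H \<and> \<not> S' \<subseteq> H}
       = 1 - 2 * pp n r s + measure_pmf.prob (round_pmf n r) {H. S \<subseteq> H \<and> S' \<subseteq> H}"
proof -
  let ?f = "\<lambda>P. (\<Sum>H\<in>Om n r. if P H then 1 else 0 :: real)"
  have pw: "(if \<not> S \<subseteq> H \<and> \<not> S' \<subseteq> H then 1 else 0 :: real) = 1 - (if S \<subseteq> H then 1 else 0)
      - (if S' \<subseteq> H then 1 else 0) + (if S \<subseteq> H \<and> S' \<subseteq> H then 1 else 0)" for H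
    by auto
  have "?f (\<lambda>H. \<not> S \<subseteq> H \<and> \<not> S' \<subseteq> H) = ?f (\<lambda>H. True) - ?f (\<lambda>H. S \<subseteq> H) - ?f (\<lambda>H. S' \<subseteq> H)
      + ?f (\<lambda>H. S \<subseteq> H \<and> S' \<subseteq> H)"
    unfolding pw by (simp add: sum.distrib sum_subtractf)
  moreover have "?f (\<lambda>H. True) = real (n choose r)"
    by (simp add: Om_card)
  moreover have "real (n choose r) > 0" using rn by simp
  ultimately have "?f (\<lambda>H. \<not> S \<subseteq> H \<and> \<not> S' \<subseteq> H) / real (n choose r) = 1
     - ?f (\<lambda>H. S \<subseteq> H) / real (n choose r) - ?f (\<lambda>H. S' \<subseteq> H) / real (n choose r)
      + ?f (\<lambda>H. S \<subseteq> H \<and> S' \<subseteq> H) / real (n choose r)"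
    by (simp add: add_divide_distrib diff_divide_distrib)
  then show ?thesis
    using prob_round[OF rn] prob_in[OF assms(1)] prob_in[OF assms(2)] by simp
qed

lemma sum_prob_both:
  "(\<Sum>S\<in>Ss n s. \<Sum>S'\<in>Ss n s. measure_pmf.prob (round_pmf n r) {H. S \<subseteq> H \<and> S' \<subseteq> H})
    = real (r choose s) ^ 2"
proof -
  let ?i = "\<lambda>S H. if S \<subseteq> H then 1 else 0 :: real"
  have "(\<Sum>S\<in>Ss n s. \<Sum>S'\<in>Ss n s. measure_pmf.prob (round_pmf n r) {H. S \<subseteq> H \<and> S' \<subseteq> H})
     = (\<Sum>S\<in>Ss n s. \<Sum>S'\<in>Ss n s. \<Sum>H\<in>Om n r. ?i S H * ?i S' H) / real (n choose r)"
  proof -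
    have pw2: "?i S H * ?i S' H = (if S \<subseteq> H \<and> S' \<subseteq> H then 1 else 0)" for S S' H by simp
    have "measure_pmf.prob (round_pmf n r) {H. S \<subseteq> H \<and> S' \<subseteq> H} = (\<Sum>H\<in>Om n r. ?i S H * ?i S' H) / real (n choose r)" for S S'
      using prob_round[OF rn, of "\<lambda>H. S \<subseteq> H \<and> S' \<subseteq> H"] by (simp only: pw2)
    then show ?thesis by (simp add: sum_divide_distrib)
  qed
  also have "(\<Sum>S\<in>Ss n s. \<Sum>S'\<in>Ss n s. \<Sum>H\<in>Om n r. ?i S H * ?i S' H)
     = (\<Sum>H\<in>Om n r. (\<Sum>S\<in>Ss n s. ?i S H) * (\<Sum>S'\<in>Ss n s. ?i S' H))"
  proof -
    have "(\<Sum>S\<in>Ss n s. \<Sum>S'\<in>Ss n s. \<Sum>H\<in>Om n r. ?i S H * ?i S' H)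
       = (\<Sum>S\<in>Ss n s. \<Sum>H\<in>Om n r. \<Sum>S'\<in>Ss n s. ?i S H * ?i S' H)"
      by (rule sum.cong[OF refl], rule sum.swap)
    also have "\<dots> = (\<Sum>H\<in>Om n r. \<Sum>S\<in>Ss n s. \<Sum>S'\<in>Ss n s. ?i S H * ?i S' H)"
      by (rule sum.swap)
    also have "\<dots> = (\<Sum>H\<in>Om n r. (\<Sum>S\<in>Ss n s. ?i S H) * (\<Sum>S'\<in>Ss n s. ?i S' H))"
      by (simp only: sum_product)
    finally show ?thesis .
  qed
  also have "\<dots> = (\<Sum>H\<in>Om n r. real (r choose s) * real (r choose s))"
  proof (rule sum.cong[OF refl])
    fix H assume H: "H \<in> Om n r"
    have "(\<Sum>S\<in>Ss n s. ?i S H) = real (card {S \<in> Ss n s. S \<subseteq> H})"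
      by (rule sum_if_card[OF Ss_finite])
    also have "{S \<in> Ss n s. S \<subseteq> H} = {S. S \<subseteq> {1..n} \<and> card S = s \<and> S \<subseteq> H}"
      by (auto simp: Ss_def)
    also have "card \<dots> = r choose s" by (rule card_sub[OF H])
    finally show "(\<Sum>S\<in>Ss n s. ?i S H) * (\<Sum>S'\<in>Ss n s. ?i S' H) = real (r choose s) * real (r choose s)"
      by simp
  qed
  also have "\<dots> = real (n choose r) * real (r choose s) ^ 2"
    by (simp add: Om_card power2_eq_square)
  finally show ?thesis using rn by simp
qed

end



lemma pred_stream_fin:
  "{\<omega> \<in> space (stream_space (measure_pmf p)). \<forall>t<k. Q (\<omega> !! t)} \<in> sets (stream_space (measure_pmf p))"
proof -
  let ?S = "stream_space (measure_pmf p)"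
  have m: "(\<lambda>\<omega>. \<omega> !! t) -` {x. Q x} \<inter> space ?S \<in> sets ?S" for t
    by (rule measurable_sets[OF measurable_snth]) simp
  have "{\<omega> \<in> space ?S. \<forall>t<k. Q (\<omega> !! t)} = space ?S \<inter> (\<Inter>t\<in>{..<k}. (\<lambda>\<omega>. \<omega> !! t) -` {x. Q x} \<inter> space ?S)"
    by blast
  also have "\<dots> \<in> sets ?S"
  proof (cases "k = 0")
    case True then show ?thesis by simp
  next
    case False then show ?thesis by (intro sets.Int sets.top sets.finite_INT m) auto
  qed
  finally show ?thesis .
qed

lemma emeasure_stream_prod:
  "emeasure (stream_space (measure_pmf p)) {\<omega> \<in> space (stream_space (measure_pmf p)). \<forall>t<k. Q (\<omega> !! t)}
   = (emeasure (measure_pmf p) {x. Q x}) ^ k"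
proof (induction k)
  case 0
  interpret S: prob_space "stream_space (measure_pmf p)"
    by (rule prob_space.prob_space_stream_space[OF prob_space_measure_pmf])
  show ?case using S.emeasure_space_1 by simp
next
  case (Suc k)
  let ?S = "stream_space (measure_pmf p)"
  have "emeasure ?S {\<omega> \<in> space ?S. \<forall>t<Suc k. Q (\<omega> !! t)}
     = (\<integral>\<^sup>+x. emeasure ?S {X \<in> space ?S. x ## X \<in> {\<omega> \<in> space ?S. \<forall>t<Suc k. Q (\<omega> !! t)}} \<partial>measure_pmf p)"
    by (rule prob_space.emeasure_stream_space[OF prob_space_measure_pmf pred_stream_fin])
  also have "\<dots> = (\<integral>\<^sup>+x. indicator {x. Q x} x * emeasure ?S {\<omega> \<in> space ?S. \<forall>t<k. Q (\<omega> !! t)} \<partial>measure_pmf p)"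
  proof (intro nn_integral_cong)
    fix x
    have e: "\<And>X. (\<forall>t<Suc k. Q ((x ## X) !! t)) = (Q x \<and> (\<forall>t<k. Q (X !! t)))"
      by (auto simp: less_Suc_eq_0_disj)
    show "emeasure ?S {X \<in> space ?S. x ## X \<in> {\<omega> \<in> space ?S. \<forall>t<Suc k. Q (\<omega> !! t)}}
       = indicator {x. Q x} x * emeasure ?S {\<omega> \<in> space ?S. \<forall>t<k. Q (\<omega> !! t)}"
      by (cases "Q x") (simp_all add: e space_stream_space streams_UNIV)
  qed
  also have "\<dots> = emeasure (measure_pmf p) {x. Q x} * emeasure ?S {\<omega> \<in> space ?S. \<forall>t<k. Q (\<omega> !! t)}"
    by (simp add: nn_integral_multc)
  finally show ?case using Suc by (simp only: power_Suc)
qed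

lemma prob_space_rounds: "prob_space (rounds_space n r)"
  unfolding rounds_space_def by (rule prob_space.prob_space_stream_space[OF prob_space_measure_pmf])

lemma measure_stream_prod:
  "measure (rounds_space n r) {\<omega> \<in> space (rounds_space n r). \<forall>t<k. Q (\<omega> !! t)}
   = (measure_pmf.prob (round_pmf n r) {x. Q x}) ^ k"
proof -
  have "emeasure (rounds_space n r) {\<omega> \<in> space (rounds_space n r). \<forall>t<k. Q (\<omega> !! t)}
     = ennreal ((measure_pmf.prob (round_pmf n r) {x. Q x}) ^ k)"
    unfolding rounds_space_def emeasure_stream_prod
    by (simp add: measure_pmf.emeasure_eq_measure ennreal_power)
  then show ?thesis by (simp add: measure_def)
qed

definition Ev :: "nat \<Rightarrow> nat \<Rightarrow> nat \<Rightarrow> nat set \<Rightarrow> nat set stream set" where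
  "Ev n r k S = {\<omega> \<in> space (rounds_space n r). \<forall>t<k. \<not> S \<subseteq> \<omega> !! t}"

definition Xk :: "nat \<Rightarrow> nat \<Rightarrow> nat \<Rightarrow> nat \<Rightarrow> nat set stream \<Rightarrow> real" where
  "Xk n r s k \<omega> = (\<Sum>S\<in>Ss n s. indicator (Ev n r k S) \<omega>)"

lemma Ev_sets: "Ev n r k S \<in> sets (rounds_space n r)"
  unfolding Ev_def rounds_space_def by (rule pred_stream_fin)

lemma Ev_Int: "Ev n r k S \<inter> Ev n r k S' = {\<omega> \<in> space (rounds_space n r). \<forall>t<k. \<not> S \<subseteq> \<omega> !! t \<and> \<not> S' \<subseteq> \<omega> !! t}"
  unfolding Ev_def by auto

lemma Xk_meas: "Xk n r s k \<in> borel_measurable (rounds_space n r)"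
  unfolding Xk_def by (intro borel_measurable_sum borel_measurable_indicator Ev_sets)

lemma Xk_nonneg: "0 \<le> Xk n r s k \<omega>"
  unfolding Xk_def by (intro sum_nonneg) auto

lemma Xk_le: "Xk n r s k \<omega> \<le> real (n choose s)"
proof -
  have "Xk n r s k \<omega> \<le> (\<Sum>S\<in>Ss n s. 1)" unfolding Xk_def
    by (intro sum_mono) (auto simp: indicator_def)
  then show ?thesis by (simp add: Ss_card)
qed

lemma Xk_sq: "(Xk n r s k \<omega>)^2 = (\<Sum>S\<in>Ss n s. \<Sum>S'\<in>Ss n s. indicator (Ev n r k S \<inter> Ev n r k S') \<omega>)"
  unfolding Xk_def power2_eq_square sum_product by (simp add: indicator_inter_arith)

lemma power_diff_le:
  fixes a c :: real
  assumes "0 \<le> c" "c \<le> a"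
  shows "a ^ k - c ^ k \<le> real k * (a - c) * a ^ (k - 1)"
proof (induction k)
  case 0 then show ?case by simp
next
  case (Suc k)
  have "a ^ Suc k - c ^ Suc k = a * (a ^ k - c ^ k) + c ^ k * (a - c)"
    by (simp add: algebra_simps)
  also have "\<dots> \<le> a * (real k * (a - c) * a ^ (k - 1)) + a ^ k * (a - c)"
    using Suc assms by (intro add_mono mult_left_mono mult_right_mono power_mono) auto
  also have "\<dots> = real (Suc k) * (a - c) * a ^ (Suc k - 1)"
    by (cases k) (simp_all add: algebra_simps)
  finally show ?case .
qed




definition aa :: "nat \<Rightarrow> nat \<Rightarrow> nat set \<Rightarrow> nat set \<Rightarrow> real" where
  "aa n r S S' = measure_pmf.prob (round_pmf n r) {H. \<not> S \<subseteq> H \<and> \<not> S' \<subseteq> H}"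

context
  fixes n r s :: nat
  assumes sr: "s \<le> r" and rn: "r \<le> n"
begin

interpretation M: prob_space "rounds_space n r" by (rule prob_space_rounds)

lemma Ev_sub: "Ev n r k S \<inter> space (rounds_space n r) = Ev n r k S"
  unfolding Ev_def by (rule Int_absorb2) (rule Collect_restrict)

lemma Ev_sub2: "Ev n r k S \<inter> Ev n r k S' \<inter> space (rounds_space n r) = Ev n r k S \<inter> Ev n r k S'"
  by (rule Int_absorb2, rule subset_trans[OF Int_lower1], unfold Ev_def, rule Collect_restrict)

lemma pp_bounds: "0 \<le> pp n r s" "pp n r s \<le> 1"
proof -
  have "card (Ss n s) > 0" using sr rn by (simp add: Ss_card)
  then obtain S where S: "S \<in> Ss n s" by (metis card_gt_0_iff ex_in_conv)
  show "0 \<le> pp n r s" using prob_in[OF sr rn S] by (metis measure_nonneg)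
  show "pp n r s \<le> 1" using prob_in[OF sr rn S] by (metis measure_pmf.prob_le_1)
qed

lemma prob_Ev: "S \<in> Ss n s \<Longrightarrow> M.prob (Ev n r k S) = (1 - pp n r s) ^ k"
  unfolding Ev_def using measure_stream_prod[of n r k "\<lambda>H. \<not> S \<subseteq> H"] prob_notin[OF sr rn] by simp

lemma prob_Ev2: "M.prob (Ev n r k S \<inter> Ev n r k S') = (aa n r S S') ^ k"
  unfolding Ev_Int aa_def using measure_stream_prod[of n r k "\<lambda>H. \<not> S \<subseteq> H \<and> \<not> S' \<subseteq> H"] by simp

lemma integrable_Xk: "integrable (rounds_space n r) (Xk n r s k)"
  unfolding Xk_def by (intro Bochner_Integration.integrable_sum integrable_real_indicator Ev_sets) (auto simp: M.emeasure_eq_measure)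

lemma integrable_Xk2: "integrable (rounds_space n r) (\<lambda>\<omega>. (Xk n r s k \<omega>)^2)"
  unfolding Xk_sq by (intro Bochner_Integration.integrable_sum integrable_real_indicator sets.Int Ev_sets) (auto simp: M.emeasure_eq_measure)

lemma E_Xk: "M.expectation (Xk n r s k) = real (n choose s) * (1 - pp n r s) ^ k"
proof -
  have "M.expectation (Xk n r s k) = (\<Sum>S\<in>Ss n s. M.prob (Ev n r k S))"
    unfolding Xk_def
    by (subst Bochner_Integration.integral_sum) (auto intro!: integrable_real_indicator Ev_sets simp: M.emeasure_eq_measure Ev_sub)
  also have "\<dots> = (\<Sum>S\<in>Ss n s. (1 - pp n r s) ^ k)"
    by (rule sum.cong) (auto simp: prob_Ev)
  finally show ?thesis by (simp add: Ss_card)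
qed

lemma E_Xk2: "M.expectation (\<lambda>\<omega>. (Xk n r s k \<omega>)^2) = (\<Sum>S\<in>Ss n s. \<Sum>S'\<in>Ss n s. (aa n r S S') ^ k)"
proof -
  have "M.expectation (\<lambda>\<omega>. (Xk n r s k \<omega>)^2) = (\<Sum>S\<in>Ss n s. \<Sum>S'\<in>Ss n s. M.prob (Ev n r k S \<inter> Ev n r k S'))"
    unfolding Xk_sq
    by (subst Bochner_Integration.integral_sum, (auto intro!: Bochner_Integration.integrable_sum integrable_real_indicator sets.Int Ev_sets simp: M.emeasure_eq_measure)[1],
        rule sum.cong[OF refl], subst Bochner_Integration.integral_sum)
       (auto intro!: integrable_real_indicator sets.Int Ev_sets simp: M.emeasure_eq_measure Ev_sub2)
  then show ?thesis by (simp add: prob_Ev2)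
qed

lemma aa_facts:
  assumes "S \<in> Ss n s" "S' \<in> Ss n s"
  shows "0 \<le> aa n r S S'" "aa n r S S' \<le> 1 - pp n r s"
    "aa n r S S' - (1 - pp n r s)^2 \<le> measure_pmf.prob (round_pmf n r) {H. S \<subseteq> H \<and> S' \<subseteq> H}"
proof -
  show "0 \<le> aa n r S S'" unfolding aa_def by simp
  have "aa n r S S' \<le> measure_pmf.prob (round_pmf n r) {H. \<not> S \<subseteq> H}"
    unfolding aa_def by (intro measure_pmf.finite_measure_mono) auto
  then show "aa n r S S' \<le> 1 - pp n r s" using prob_notin[OF sr rn assms(1)] by simp
  show "aa n r S S' - (1 - pp n r s)^2 \<le> measure_pmf.prob (round_pmf n r) {H. S \<subseteq> H \<and> S' \<subseteq> H}"
    unfolding aa_def prob_both_not[OF sr rn assms]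
    by (simp add: power2_eq_square algebra_simps)
qed

lemma var_Xk: "M.variance (Xk n r s k) \<le> real k * (1 - pp n r s) ^ (k - 1) * real (r choose s) ^ 2"
proof -
  define q where "q = 1 - pp n r s"
  let ?b = "\<lambda>S S'. measure_pmf.prob (round_pmf n r) {H. S \<subseteq> H \<and> S' \<subseteq> H}"
  have q0: "0 \<le> q" "q \<le> 1" using pp_bounds by (auto simp: q_def)
  have "M.variance (Xk n r s k) = (\<Sum>S\<in>Ss n s. \<Sum>S'\<in>Ss n s. (aa n r S S') ^ k) - (real (n choose s) * q ^ k)^2"
    by (subst M.variance_eq) (simp_all add: integrable_Xk integrable_Xk2 E_Xk2 E_Xk q_def)
  also have "(real (n choose s) * q ^ k)^2 = (\<Sum>S\<in>Ss n s. \<Sum>S'\<in>Ss n s. (q^2) ^ k)"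
    by (simp add: Ss_card power2_eq_square power_mult_distrib)
  also have "(\<Sum>S\<in>Ss n s. \<Sum>S'\<in>Ss n s. (aa n r S S') ^ k) - (\<Sum>S\<in>Ss n s. \<Sum>S'\<in>Ss n s. (q^2) ^ k)
     = (\<Sum>S\<in>Ss n s. \<Sum>S'\<in>Ss n s. (aa n r S S') ^ k - (q^2) ^ k)"
    by (simp add: sum_subtractf)
  also have "\<dots> \<le> (\<Sum>S\<in>Ss n s. \<Sum>S'\<in>Ss n s. real k * q ^ (k - 1) * ?b S S')"
  proof (intro sum_mono)
    fix S S' assume S: "S \<in> Ss n s" and S': "S' \<in> Ss n s"
    note af = aa_facts[OF S S', folded q_def]
    have b0: "0 \<le> ?b S S'" by simp
    show "(aa n r S S') ^ k - (q^2) ^ k \<le> real k * q ^ (k - 1) * ?b S S'"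
    proof (cases "q^2 \<le> aa n r S S'")
      case True
      have "(aa n r S S') ^ k - (q^2) ^ k \<le> real k * (aa n r S S' - q^2) * (aa n r S S') ^ (k - 1)"
        using True by (intro power_diff_le) auto
      also have "\<dots> \<le> real k * ?b S S' * q ^ (k - 1)"
        using af True b0 by (intro mult_mono power_mono) auto
      finally show ?thesis by (simp add: algebra_simps)
    next
      case False
      then have "(aa n r S S') ^ k \<le> (q^2) ^ k" using af by (intro power_mono) auto
      moreover have "0 \<le> real k * q ^ (k - 1) * ?b S S'" using q0 b0 by simp
      ultimately show ?thesis by linarith
    qed
  qed
  also have "\<dots> = real k * q ^ (k - 1) * (\<Sum>S\<in>Ss n s. \<Sum>S'\<in>Ss n s. ?b S S')"
    by (simp add: sum_distrib_left)
  also have "\<dots> = real k * q ^ (k - 1) * real (r choose s) ^ 2"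
    by (simp add: sum_prob_both[OF sr rn])
  finally show ?thesis by (simp add: q_def)
qed

end



lemma space_rounds: "space (rounds_space n r) = UNIV"
  by (simp add: rounds_space_def space_stream_space streams_UNIV)

lemma Xk_card: "Xk n r s k \<omega> = real (card {S \<in> Ss n s. \<forall>t<k. \<not> S \<subseteq> \<omega> !! t})"
proof -
  have "Xk n r s k \<omega> = (\<Sum>S\<in>Ss n s. if \<forall>t<k. \<not> S \<subseteq> \<omega> !! t then 1 else 0)"
    unfolding Xk_def by (rule sum.cong) (auto simp: indicator_def Ev_def space_rounds)
  then show ?thesis by (simp add: sum_if_card[OF Ss_finite])
qed

lemma collected_eq: "collected n s \<omega> k = Ss n s - {S \<in> Ss n s. \<forall>t<k. \<not> S \<subseteq> \<omega> !! t}"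
  unfolding collected_def Ss_def by blast

lemma card_collected: "real (card (collected n s \<omega> k)) = real (n choose s) - Xk n r s k \<omega>"
proof -
  have "card (collected n s \<omega> k) = card (Ss n s) - card {S \<in> Ss n s. \<forall>t<k. \<not> S \<subseteq> \<omega> !! t}"
    unfolding collected_eq by (rule card_Diff_subset) (auto intro: finite_subset[OF _ Ss_finite])
  moreover have "card {S \<in> Ss n s. \<forall>t<k. \<not> S \<subseteq> \<omega> !! t} \<le> card (Ss n s)"
    by (rule card_mono[OF Ss_finite]) auto
  ultimately show ?thesis by (simp add: Xk_card Ss_card of_nat_diff)
qed

lemma collected_mono: "j \<le> k \<Longrightarrow> card (collected n s \<omega> j) \<le> card (collected n s \<omega> k)"
  unfolding collected_eq
  by (rule card_mono) (auto intro: finite_subset[OF _ Ss_finite])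

lemma T_gt_iff:
  "(enat k < T_alpha n s \<alpha> \<omega>) = (\<alpha> * real (n choose s) < Xk n r s k \<omega>)"
proof -
  let ?P = "\<lambda>k. real (card (collected n s \<omega> k)) \<ge> (1 - \<alpha>) * real (n choose s)"
  have mono: "?P j \<Longrightarrow> j \<le> k \<Longrightarrow> ?P k" for j k
    using collected_mono[of j k n s \<omega>] by (meson of_nat_le_iff order_trans)
  have "(enat k < T_alpha n s \<alpha> \<omega>) = (\<not> ?P k)"
  proof (cases "\<exists>k. ?P k")
    case True
    then have T: "T_alpha n s \<alpha> \<omega> = enat (LEAST k. ?P k)" unfolding T_alpha_def by simp
    show ?thesis
    proof
      assume "enat k < T_alpha n s \<alpha> \<omega>"
      then have "k < (LEAST k. ?P k)" using T by simp
      then show "\<not> ?P k" by (rule not_less_Least)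
    next
      assume nP: "\<not> ?P k"
      have "?P (LEAST k. ?P k)" using True by (metis LeastI)
      then have "\<not> (LEAST k. ?P k) \<le> k" using mono nP by blast
      then show "enat k < T_alpha n s \<alpha> \<omega>" using T by simp
    qed
  next
    case False
    then show ?thesis unfolding T_alpha_def by simp
  qed
  also have "\<dots> = (\<alpha> * real (n choose s) < Xk n r s k \<omega>)"
    unfolding card_collected[of n s \<omega> k r] by (simp add: algebra_simps not_le)
  finally show ?thesis .
qed

definition Pk :: "nat \<Rightarrow> nat \<Rightarrow> nat \<Rightarrow> real \<Rightarrow> nat \<Rightarrow> real" where
  "Pk n r s \<alpha> k = measure (rounds_space n r) {\<omega> \<in> space (rounds_space n r). \<alpha> * real (n choose s) < Xk n r s k \<omega>}"

lemma Pk_sets: "{\<omega> \<in> space (rounds_space n r). c < Xk n r s k \<omega>} \<in> sets (rounds_space n r)"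
proof -
  have "Xk n r s k -` {c<..} \<inter> space (rounds_space n r) \<in> sets (rounds_space n r)"
    by (rule measurable_sets[OF Xk_meas]) simp
  moreover have "Xk n r s k -` {c<..} \<inter> space (rounds_space n r) = {\<omega> \<in> space (rounds_space n r). c < Xk n r s k \<omega>}"
    by auto
  ultimately show ?thesis by simp
qed

lemma expected_T_eq: "expected_T n r s \<alpha> = (\<Sum>k. ennreal (Pk n r s \<alpha> k))"
proof -
  let ?M = "rounds_space n r"
  interpret M: prob_space ?M by (rule prob_space_rounds)
  define F where "F i = {x\<in>space ?M. enat i < T_alpha n s \<alpha> x}" for i :: nat
  have FX: "F i = {\<omega> \<in> space ?M. \<alpha> * real (n choose s) < Xk n r s i \<omega>}" for i
    unfolding F_def by (simp only: T_gt_iff[where r=r])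
  { fix x
    have "(\<lambda>i::nat. if i < T_alpha n s \<alpha> x then 1 else 0) sums ennreal_of_enat (T_alpha n s \<alpha> x)"
      using sums_If_finite[of "\<lambda>r. r < T_alpha n s \<alpha> x" "\<lambda>_. 1 :: ennreal"]
      by (cases "T_alpha n s \<alpha> x") (simp_all add: sums_def of_nat_tendsto_top_ennreal)
    also have "(\<lambda>i. (if i < T_alpha n s \<alpha> x then 1 else 0)) = (\<lambda>i. indicator (F i) x)"
      by (simp add: one_ennreal_def F_def fun_eq_iff space_rounds)
    finally have "ennreal_of_enat (T_alpha n s \<alpha> x) = (\<Sum>i. indicator (F i) x)"
      by (simp add: sums_iff) }
  then have "expected_T n r s \<alpha> = (\<integral>\<^sup>+x. (\<Sum>i. indicator (F i) x) \<partial>?M)"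
    unfolding expected_T_def by (simp cong: nn_integral_cong)
  also have "\<dots> = (\<Sum>i. emeasure ?M (F i))"
  proof -
    have Fs: "F i \<in> sets ?M" for i unfolding FX by (rule Pk_sets)
    show ?thesis by (subst nn_integral_suminf) (simp_all add: Fs borel_measurable_indicator)
  qed
  also have "\<dots> = (\<Sum>k. ennreal (Pk n r s \<alpha> k))"
    by (simp add: FX Pk_def M.emeasure_eq_measure)
  finally show ?thesis .
qed

context
  fixes n r s :: nat
  assumes sr: "s \<le> r" and rn: "r \<le> n"
begin

interpretation M: prob_space "rounds_space n r" by (rule prob_space_rounds)

lemma Pk_upper:
  assumes a1: "a1 < \<alpha>" and q: "(1 - pp n r s) ^ k \<le> a1" and N: "0 < real (n choose s)"
  shows "Pk n r s \<alpha> k \<le> real k * (1 - pp n r s) ^ (k - 1) * real (r choose s) ^ 2 / ((\<alpha> - a1) * real (n choose s))^2"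
proof -
  let ?N = "real (n choose s)"
  have d: "0 < (\<alpha> - a1) * ?N" using a1 N by simp
  have "Pk n r s \<alpha> k \<le> M.prob {\<omega> \<in> space (rounds_space n r). (\<alpha> - a1) * ?N \<le> \<bar>Xk n r s k \<omega> - M.expectation (Xk n r s k)\<bar>}"
    unfolding Pk_def
  proof (rule M.finite_measure_mono)
    show "{\<omega> \<in> space (rounds_space n r). \<alpha> * ?N < Xk n r s k \<omega>}
      \<subseteq> {\<omega> \<in> space (rounds_space n r). (\<alpha> - a1) * ?N \<le> \<bar>Xk n r s k \<omega> - M.expectation (Xk n r s k)\<bar>}"
    proof (rule subsetI)
      fix \<omega> assume w: "\<omega> \<in> {\<omega> \<in> space (rounds_space n r). \<alpha> * ?N < Xk n r s k \<omega>}"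
      then have "\<alpha> * ?N < Xk n r s k \<omega>" by simp
      moreover have "M.expectation (Xk n r s k) \<le> a1 * ?N"
        unfolding E_Xk[OF sr rn] using q N by (simp add: mult.commute mult_right_mono)
      ultimately have "(\<alpha> - a1) * ?N \<le> \<bar>Xk n r s k \<omega> - M.expectation (Xk n r s k)\<bar>"
        by (simp add: algebra_simps)
      then show "\<omega> \<in> {\<omega> \<in> space (rounds_space n r). (\<alpha> - a1) * ?N \<le> \<bar>Xk n r s k \<omega> - M.expectation (Xk n r s k)\<bar>}"
        using w by simp
    qed
    have "Measurable.pred (rounds_space n r) (\<lambda>\<omega>. (\<alpha> - a1) * ?N \<le> \<bar>Xk n r s k \<omega> - M.expectation (Xk n r s k)\<bar>)"
      using Xk_meas[of n r s k] by measurable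
    then show "{\<omega> \<in> space (rounds_space n r). (\<alpha> - a1) * ?N \<le> \<bar>Xk n r s k \<omega> - M.expectation (Xk n r s k)\<bar>} \<in> sets (rounds_space n r)"
      by simp
  qed
  also have "\<dots> \<le> M.variance (Xk n r s k) / ((\<alpha> - a1) * ?N)^2"
    by (rule M.Chebyshev_inequality[OF Xk_meas integrable_Xk2[OF sr rn] d])
  also have "\<dots> \<le> real k * (1 - pp n r s) ^ (k - 1) * real (r choose s) ^ 2 / ((\<alpha> - a1) * ?N)^2"
    by (rule divide_right_mono[OF var_Xk[OF sr rn]]) simp
  finally show ?thesis .
qed

lemma Pk_lower:
  assumes a0: "\<alpha> < a0" and q: "a0 \<le> (1 - pp n r s) ^ k" and N: "0 < real (n choose s)"
  shows "1 - real k * real (r choose s) ^ 2 / ((a0 - \<alpha>) * real (n choose s))^2 \<le> Pk n r s \<alpha> k"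
proof -
  let ?N = "real (n choose s)"
  let ?A = "{\<omega> \<in> space (rounds_space n r). \<alpha> * ?N < Xk n r s k \<omega>}"
  let ?B = "{\<omega> \<in> space (rounds_space n r). (a0 - \<alpha>) * ?N \<le> \<bar>Xk n r s k \<omega> - M.expectation (Xk n r s k)\<bar>}"
  have d: "0 < (a0 - \<alpha>) * ?N" using a0 N by simp
  have Bs: "?B \<in> sets (rounds_space n r)"
  proof -
    have "Measurable.pred (rounds_space n r) (\<lambda>\<omega>. (a0 - \<alpha>) * ?N \<le> \<bar>Xk n r s k \<omega> - M.expectation (Xk n r s k)\<bar>)"
      using Xk_meas[of n r s k] by measurable
    then show ?thesis by simp
  qed
  have "M.prob (space (rounds_space n r) - ?A) \<le> M.prob ?B"
  proof (rule M.finite_measure_mono[OF _ Bs])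
    show "space (rounds_space n r) - ?A \<subseteq> ?B"
    proof
      fix \<omega> assume w: "\<omega> \<in> space (rounds_space n r) - ?A"
      then have "Xk n r s k \<omega> \<le> \<alpha> * ?N" by auto
      moreover have "a0 * ?N \<le> M.expectation (Xk n r s k)"
        unfolding E_Xk[OF sr rn] using q N by (simp add: mult.commute mult_right_mono)
      ultimately show "\<omega> \<in> ?B" using w by (simp add: algebra_simps)
    qed
  qed
  also have "\<dots> \<le> M.variance (Xk n r s k) / ((a0 - \<alpha>) * ?N)^2"
    by (rule M.Chebyshev_inequality[OF Xk_meas integrable_Xk2[OF sr rn] d])
  also have "\<dots> \<le> real k * real (r choose s) ^ 2 / ((a0 - \<alpha>) * ?N)^2"
  proof (rule divide_right_mono)
    have "(1 - pp n r s) ^ (k - 1) \<le> 1" using pp_bounds[OF sr rn] by (intro power_le_one) auto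
    then have "real k * (1 - pp n r s) ^ (k - 1) * real (r choose s) ^ 2 \<le> real k * 1 * real (r choose s) ^ 2"
      by (intro mult_right_mono mult_left_mono) auto
    then show "M.variance (Xk n r s k) \<le> real k * real (r choose s) ^ 2"
      using var_Xk[OF sr rn, of k] by simp
  qed simp
  finally have "M.prob (space (rounds_space n r) - ?A) \<le> real k * real (r choose s) ^ 2 / ((a0 - \<alpha>) * ?N)^2" .
  moreover have "M.prob (space (rounds_space n r) - ?A) = 1 - M.prob ?A"
    by (rule M.prob_compl) (rule Pk_sets)
  ultimately show ?thesis unfolding Pk_def by simp
qed

end



context
  fixes n r s :: nat and \<alpha> :: real
  assumes s1: "1 \<le> s" and sr: "s \<le> r" and rn: "r \<le> n" and a0: "0 < \<alpha>" and a1: "\<alpha> < 1"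
begin

interpretation M: prob_space "rounds_space n r" by (rule prob_space_rounds)

lemma N_pos: "0 < real (n choose s)" using sr rn by simp
lemma C_pos: "1 \<le> real (r choose s)" using sr by (simp add: Suc_leI)
lemma lam_pos: "0 < ln (1 / \<alpha>)" using a0 a1 by simp
lemma alpha_exp: "exp (- ln (1 / \<alpha>)) = \<alpha>" using a0 by (simp add: ln_div)

lemma p_pos: "0 < pp n r s" unfolding pp_def using N_pos C_pos sr by (intro divide_pos_pos) auto

lemma pL: "pp n r s * (real (n choose s) * ln (1 / \<alpha>) / real (r choose s)) = ln (1 / \<alpha>)"
  unfolding pp_def using N_pos C_pos sr by (simp add: field_simps)

lemma Pk_le1: "Pk n r s \<alpha> k \<le> 1" unfolding Pk_def by (rule M.prob_le_1)
lemma Pk_ge0: "0 \<le> Pk n r s \<alpha> k" unfolding Pk_def by simp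

lemma upper_bound:
  assumes e: "0 < \<epsilon>"
  defines "L \<equiv> real (n choose s) * ln (1 / \<alpha>) / real (r choose s)"
  defines "\<delta> \<equiv> \<alpha> - exp (- (1 + \<epsilon>) * ln (1 / \<alpha>))"
  defines "k1 \<equiv> nat \<lceil>(1 + \<epsilon>) * L\<rceil>"
  shows "0 < \<delta>" "expected_T n r s \<alpha> \<le> ennreal (real k1 + 1 / \<delta>^2)"
proof -
  let ?N = "real (n choose s)" and ?C = "real (r choose s)"
  define p where "p = pp n r s"
  define q where "q = 1 - p"
  define a1' where "a1' = exp (- (1 + \<epsilon>) * ln (1 / \<alpha>))"
  have p0: "0 < p" "p \<le> 1" using p_pos pp_bounds[OF sr rn] by (auto simp: p_def)
  have q0: "0 \<le> q" "q < 1" using p0 by (auto simp: q_def)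
  have "0 < \<epsilon> * ln (1 / \<alpha>)" using lam_pos e by simp
  then have "- (1 + \<epsilon>) * ln (1 / \<alpha>) < - ln (1 / \<alpha>)" by (simp add: algebra_simps)
  then have "a1' < exp (- ln (1 / \<alpha>))" unfolding a1'_def by simp
  then have a1a: "a1' < \<alpha>" using alpha_exp by simp
  then show d0: "0 < \<delta>" unfolding \<delta>_def a1'_def[symmetric] by simp
  have qk: "q ^ k \<le> a1'" if "k1 \<le> k" for k
  proof -
    have "q ^ k \<le> q ^ k1" using q0 that by (intro power_decreasing) auto
    also have "q ^ k1 \<le> exp (- p) ^ k1"
      using q0 exp_ge_add_one_self[of "-p"] unfolding q_def by (intro power_mono) auto
    also have "\<dots> = exp (- p * real k1)" by (simp add: exp_of_nat_mult[symmetric] mult.commute)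
    also have "\<dots> \<le> exp (- p * ((1 + \<epsilon>) * L))"
      using p0 unfolding k1_def by (simp add: real_nat_ceiling_ge)
    also have "- p * ((1 + \<epsilon>) * L) = - (1 + \<epsilon>) * (p * L)" by (simp add: algebra_simps)
    also have "p * L = ln (1 / \<alpha>)" using pL unfolding p_def L_def .
    finally show ?thesis unfolding a1'_def .
  qed
  define g where "g k = (if k < k1 then 1 else 0) + real k * q ^ (k - 1) * (?C^2 / (\<delta> * ?N)^2)" for k
  have g0: "0 \<le> g k" for k unfolding g_def using q0 by simp
  have Pg: "Pk n r s \<alpha> k \<le> g k" for k
  proof (cases "k < k1")
    case True
    have "0 \<le> real k * q ^ (k - 1) * (?C^2 / (\<delta> * ?N)^2)" using q0 by simp
    then show ?thesis unfolding g_def using Pk_le1[of k] True by simp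
  next
    case False
    then have "Pk n r s \<alpha> k \<le> real k * (1 - pp n r s) ^ (k - 1) * ?C ^ 2 / ((\<alpha> - a1') * ?N)^2"
      using qk[of k] a1a N_pos by (intro Pk_upper[OF sr rn]) (auto simp: q_def p_def)
    then show ?thesis using False unfolding g_def \<delta>_def a1'_def q_def p_def by simp
  qed
  have s1': "(\<lambda>k. real k * q ^ (k - 1)) sums (1 / (1 - q)^2)"
  proof -
    have "(\<lambda>k. real (Suc k) * q ^ k) sums (1 / (1 - q)^2)"
      using geometric_deriv_sums[of q] q0 by simp
    then show ?thesis using sums_Suc_iff[of "\<lambda>k. real k * q ^ (k - 1)" "1 / (1 - q)^2"] by simp
  qed
  have s2: "(\<lambda>k. if k < k1 then 1 else 0 :: real) sums real k1"
    using sums_If_finite[of "\<lambda>k. k < k1" "\<lambda>_. 1::real"] by simp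
  have "g sums (real k1 + 1 / (1 - q)^2 * (?C^2 / (\<delta> * ?N)^2))"
    unfolding g_def by (intro sums_add s2 sums_mult2 s1')
  also have "1 / (1 - q)^2 * (?C^2 / (\<delta> * ?N)^2) = 1 / \<delta>^2"
    using N_pos C_pos d0 sr unfolding q_def p_def pp_def by (simp add: field_simps)
  finally have gs: "g sums (real k1 + 1 / \<delta>^2)" .
  have "expected_T n r s \<alpha> = (\<Sum>k. ennreal (Pk n r s \<alpha> k))" by (rule expected_T_eq)
  also have "\<dots> \<le> (\<Sum>k. ennreal (g k))"
    by (intro suminf_le summableI ennreal_leI Pg)
  also have "\<dots> = ennreal (real k1 + 1 / \<delta>^2)"
    by (rule suminf_ennreal_eq[OF g0 gs])
  finally show "expected_T n r s \<alpha> \<le> ennreal (real k1 + 1 / \<delta>^2)" .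
qed

lemma expected_T_finite: "expected_T n r s \<alpha> < top"
proof -
  have "expected_T n r s \<alpha> \<le> ennreal (real (nat \<lceil>(1 + 1) * (real (n choose s) * ln (1 / \<alpha>) / real (r choose s))\<rceil>)
      + 1 / (\<alpha> - exp (- (1 + 1) * ln (1 / \<alpha>)))^2)"
    by (rule upper_bound) simp
  also have "\<dots> < top" by simp
  finally show ?thesis .
qed

end



context
  fixes n r s :: nat and \<alpha> :: real
  assumes s1: "1 \<le> s" and sr: "s \<le> r" and rn: "r \<le> n" and a0: "0 < \<alpha>" and a1: "\<alpha> < 1"
begin

lemma lower_bound:
  assumes e: "0 < \<epsilon>" "\<epsilon> < 1" and pe: "pp n r s \<le> \<epsilon> / 4" "pp n r s \<le> 1 / 2"
  defines "L \<equiv> real (n choose s) * ln (1 / \<alpha>) / real (r choose s)"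
  defines "\<delta> \<equiv> exp (- (1 - \<epsilon> / 2) * ln (1 / \<alpha>)) - \<alpha>"
  defines "k0 \<equiv> nat \<lfloor>(1 - \<epsilon>) * L\<rfloor>"
  shows "0 < \<delta>"
    "real k0 * (1 - real k0 * real (r choose s) ^ 2 / (\<delta> * real (n choose s))^2) \<le> enn2real (expected_T n r s \<alpha>)"
proof -
  let ?N = "real (n choose s)" and ?C = "real (r choose s)"
  define lam where "lam = ln (1 / \<alpha>)"
  define p where "p = pp n r s"
  define q where "q = 1 - p"
  define a0' where "a0' = exp (- (1 - \<epsilon> / 2) * lam)"
  have lam0: "0 < lam" unfolding lam_def by (rule lam_pos[OF s1 sr rn a0 a1])
  have p0: "0 < p" "p \<le> 1 / 2" "p \<le> \<epsilon> / 4" using p_pos[OF s1 sr rn a0 a1] pe by (auto simp: p_def)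
  have q0: "0 < q" using p0 by (auto simp: q_def)
  have L0: "0 \<le> L" unfolding L_def using N_pos[OF s1 sr rn a0 a1] C_pos[OF s1 sr rn a0 a1] lam0 lam_def by simp
  have pL': "p * L = lam" using pL[OF s1 sr rn a0 a1] unfolding p_def L_def lam_def .
  have "0 < \<epsilon> / 2 * lam" using lam0 e by simp
  then have "- lam < - (1 - \<epsilon> / 2) * lam" by (simp add: algebra_simps)
  then have "exp (- lam) < a0'" unfolding a0'_def by simp
  then have aa0: "\<alpha> < a0'" using alpha_exp[OF s1 sr rn a0 a1] unfolding lam_def by simp
  then show d0: "0 < \<delta>" unfolding \<delta>_def a0'_def[symmetric] lam_def[symmetric] by simp
  have k0L: "real k0 \<le> (1 - \<epsilon>) * L" unfolding k0_def using e L0 by (intro of_nat_floor) simp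
  have qk: "a0' \<le> q ^ k" if "k < k0" for k
  proof -
    have lnq: "- p - 2 * p^2 \<le> ln q" unfolding q_def using p0 by (intro ln_one_minus_pos_lower_bound) auto
    have kL: "real k \<le> (1 - \<epsilon>) * L" using that k0L by simp
    have kp: "real k * p \<le> (1 - \<epsilon>) * lam"
    proof -
      have "real k * p \<le> (1 - \<epsilon>) * L * p" using kL p0 by (intro mult_right_mono) auto
      also have "\<dots> = (1 - \<epsilon>) * lam" using pL' by (simp add: algebra_simps)
      finally show ?thesis .
    qed
    have "real k * p * (1 + 2 * p) \<le> (1 - \<epsilon>) * lam * (1 + \<epsilon> / 2)"
      using kp p0 e lam0 by (rule_tac mult_mono) auto
    also have "\<dots> \<le> (1 - \<epsilon> / 2) * lam"
    proof -
      have "(1 - \<epsilon>) * (1 + \<epsilon> / 2) \<le> 1 - \<epsilon> / 2" using e by (simp add: algebra_simps power2_eq_square)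
      then show ?thesis using lam0 by (metis mult.commute mult.left_commute mult_right_mono less_imp_le)
    qed
    finally have "- (1 - \<epsilon> / 2) * lam \<le> real k * (- p - 2 * p^2)"
      by (simp add: algebra_simps power2_eq_square)
    also have "\<dots> \<le> real k * ln q" using lnq by (intro mult_left_mono) auto
    finally have "a0' \<le> exp (real k * ln q)" unfolding a0'_def by simp
    also have "exp (real k * ln q) = q ^ k" using q0 by (simp add: exp_of_nat_mult)
    finally show ?thesis .
  qed
  define K where "K = ?C ^ 2 / (\<delta> * ?N)^2"
  have K0: "0 \<le> K" unfolding K_def by simp
  have Pk_lo: "1 - real k0 * K \<le> Pk n r s \<alpha> k" if "k < k0" for k
  proof -
    have "1 - real k * ?C ^ 2 / ((a0' - \<alpha>) * ?N)^2 \<le> Pk n r s \<alpha> k"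
      using aa0 qk[OF that] N_pos[OF s1 sr rn a0 a1] unfolding q_def p_def
      by (intro Pk_lower[OF sr rn]) auto
    moreover have "real k * K \<le> real k0 * K" using that K0 by (intro mult_right_mono) auto
    ultimately show ?thesis unfolding K_def \<delta>_def a0'_def lam_def by simp
  qed
  have "real k0 * (1 - real k0 * K) = (\<Sum>k<k0. 1 - real k0 * K)" by simp
  also have "\<dots> \<le> (\<Sum>k<k0. Pk n r s \<alpha> k)" by (intro sum_mono Pk_lo) simp
  also have "\<dots> = enn2real (ennreal (\<Sum>k<k0. Pk n r s \<alpha> k))"
    by (simp add: sum_nonneg Pk_ge0[OF s1 sr rn a0 a1])
  also have "\<dots> \<le> enn2real (expected_T n r s \<alpha>)"
  proof (rule enn2real_mono)
    have "ennreal (\<Sum>k<k0. Pk n r s \<alpha> k) = (\<Sum>k<k0. ennreal (Pk n r s \<alpha> k))"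
      by (simp add: Pk_ge0[OF s1 sr rn a0 a1])
    also have "\<dots> \<le> (\<Sum>k. ennreal (Pk n r s \<alpha> k))"
      by (rule sum_le_suminf[OF summableI]) auto
    also have "\<dots> = expected_T n r s \<alpha>" by (rule expected_T_eq[symmetric])
    finally show "ennreal (\<Sum>k<k0. Pk n r s \<alpha> k) \<le> expected_T n r s \<alpha>" .
    show "expected_T n r s \<alpha> < top" by (rule expected_T_finite[OF s1 sr rn a0 a1])
  qed
  finally show "real k0 * (1 - real k0 * ?C ^ 2 / (\<delta> * ?N)^2) \<le> enn2real (expected_T n r s \<alpha>)"
    unfolding K_def by simp
qed

end



lemma N_large:
  assumes s1: "1 \<le> s"
  shows "\<exists>n0. \<forall>n\<ge>n0. B \<le> real (n choose s)"
proof (intro exI allI impI)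
  fix n assume n: "max s (nat \<lceil>B * real s\<rceil>) \<le> n"
  have s0: "0 < real s" using s1 by simp
  have ns: "1 \<le> real n / real s" using n s0 by (simp add: field_simps)
  have "B * real s \<le> real n" using n real_nat_ceiling_ge[of "B * real s"] by linarith
  then have "B \<le> real n / real s" using s0 by (simp add: field_simps)
  also have "real n / real s \<le> (real n / real s) ^ s"
    using power_increasing[of 1 s "real n / real s"] ns s1 by simp
  also have "\<dots> \<le> real (n choose s)" using n by (intro binomial_ge_n_over_k_pow_k) simp
  finally show "B \<le> real (n choose s)" .
qed

theorem theorem2:
  fixes r s :: nat and \<alpha> :: real
  assumes "1 \<le> s" "s \<le> r" "0 < \<alpha>" "\<alpha> < 1"
  shows "(\<lambda>n. enn2real (expected_T n r s \<alpha>) /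
              (real (n choose s) * ln (1 / \<alpha>) / real (r choose s)))
         \<longlonglongrightarrow> 1"
proof (rule LIMSEQ_I)
  fix e :: real assume e: "0 < e"
  note s1 = assms(1) and sr = assms(2) and a0 = assms(3) and a1 = assms(4)
  define \<epsilon> where "\<epsilon> = min (e / 4) (1 / 4)"
  have \<epsilon>0: "0 < \<epsilon>" "\<epsilon> \<le> 1 / 4" "\<epsilon> \<le> e / 4" using e by (auto simp: \<epsilon>_def)
  define C where "C = real (r choose s)"
  define lam where "lam = ln (1 / \<alpha>)"
  have C1: "1 \<le> C" unfolding C_def using sr by (simp add: Suc_leI)
  have lam0: "0 < lam" unfolding lam_def using a0 a1 by simp
  define \<delta>1 where "\<delta>1 = \<alpha> - exp (- (1 + \<epsilon>) * ln (1 / \<alpha>))"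
  define \<delta>0 where "\<delta>0 = exp (- (1 - \<epsilon> / 2) * ln (1 / \<alpha>)) - \<alpha>"
  have d1: "0 < \<delta>1" unfolding \<delta>1_def using upper_bound(1)[OF s1 sr order.refl a0 a1 \<epsilon>0(1)] .
  have d0: "0 < \<delta>0"
  proof -
    have "0 < \<epsilon> / 2 * lam" using lam0 \<epsilon>0 by simp
    then have "- lam < - (1 - \<epsilon> / 2) * lam" by (simp add: algebra_simps)
    then have "exp (- lam) < exp (- (1 - \<epsilon> / 2) * lam)" by simp
    moreover have "exp (- lam) = \<alpha>" unfolding lam_def using a0 by (simp add: ln_div)
    ultimately show ?thesis unfolding \<delta>0_def lam_def by simp
  qed
  define B where "B = Max {C * (1 + 1 / \<delta>1^2) / (\<epsilon> * lam), 4 * C / \<epsilon>, 2 * C / (\<epsilon> * lam), 2 * lam * C / (\<delta>0^2 * \<epsilon>), 1}"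
  have B: "C * (1 + 1 / \<delta>1^2) / (\<epsilon> * lam) \<le> B" "4 * C / \<epsilon> \<le> B" "2 * C / (\<epsilon> * lam) \<le> B"
     "2 * lam * C / (\<delta>0^2 * \<epsilon>) \<le> B" "1 \<le> B"
    unfolding B_def by (simp_all add: Max_ge_iff)
  obtain n0 where n0: "\<And>n. n \<ge> n0 \<Longrightarrow> B \<le> real (n choose s)" using N_large[OF s1] by blast
  show "\<exists>no. \<forall>n\<ge>no. norm (enn2real (expected_T n r s \<alpha>) / (real (n choose s) * ln (1 / \<alpha>) / real (r choose s)) - 1) < e"
  proof (intro exI allI impI)
    fix n assume n: "max n0 r \<le> n"
    then have rn: "r \<le> n" by simp
    define N where "N = real (n choose s)"
    define L where "L = N * lam / C"
    define E where "E = enn2real (expected_T n r s \<alpha>)"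
    have NB: "B \<le> N" unfolding N_def using n n0 by simp
    have N0: "0 < N" using NB B(5) by simp
    have L0: "0 < L" unfolding L_def using N0 lam0 C1 by simp
    have up: "E \<le> (1 + 2 * \<epsilon>) * L"
    proof -
      have "E \<le> real (nat \<lceil>(1 + \<epsilon>) * L\<rceil>) + 1 / \<delta>1^2"
        unfolding E_def L_def N_def C_def lam_def \<delta>1_def
        using upper_bound(2)[OF s1 sr rn a0 a1 \<epsilon>0(1)] d1 unfolding \<delta>1_def
        by (intro enn2real_leI) (auto simp: add_nonneg_nonneg)
      also have "real (nat \<lceil>(1 + \<epsilon>) * L\<rceil>) \<le> (1 + \<epsilon>) * L + 1"
        using L0 \<epsilon>0 of_int_ceiling_le_add_one[of "(1 + \<epsilon>) * L"] by (simp add: of_nat_nat)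
      also have "1 + 1 / \<delta>1^2 \<le> \<epsilon> * L"
      proof -
        have "C * (1 + 1 / \<delta>1^2) / (\<epsilon> * lam) \<le> N" using B(1) NB by simp
        then have "C * (1 + 1 / \<delta>1^2) \<le> N * (\<epsilon> * lam)" using \<epsilon>0 lam0 by (simp add: pos_divide_le_eq)
        then show ?thesis unfolding L_def using C1 by (simp add: pos_le_divide_eq algebra_simps)
      qed
      then have "(1 + \<epsilon>) * L + 1 + 1 / \<delta>1^2 \<le> (1 + 2 * \<epsilon>) * L" by (simp add: algebra_simps)
      finally show ?thesis by simp
    qed
    have pp_eq: "pp n r s = C / N" unfolding pp_def C_def N_def ..
    have pe1: "pp n r s \<le> \<epsilon> / 4"
    proof -
      have "4 * C / \<epsilon> \<le> N" using B(2) NB by simp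
      then have "4 * C \<le> N * \<epsilon>" using \<epsilon>0 by (simp add: pos_divide_le_eq)
      then show ?thesis unfolding pp_eq using N0 by (simp add: pos_divide_le_eq mult.commute)
    qed
    have pe2: "pp n r s \<le> 1 / 2" using pe1 \<epsilon>0 by simp
    define k0 where "k0 = nat \<lfloor>(1 - \<epsilon>) * L\<rfloor>"
    have lo0: "real k0 * (1 - real k0 * C ^ 2 / (\<delta>0 * N)^2) \<le> E"
    proof -
      have e1: "\<epsilon> < 1" using \<epsilon>0 by simp
      show ?thesis using lower_bound(2)[OF s1 sr rn a0 a1 \<epsilon>0(1) e1 pe1 pe2]
        unfolding k0_def L_def E_def \<delta>0_def C_def N_def lam_def .
    qed
    have k0L: "real k0 \<le> L"
    proof -
      have h: "0 \<le> (1 - \<epsilon>) * L" using L0 \<epsilon>0 by simp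
      have h2: "0 \<le> \<epsilon> * L" using L0 \<epsilon>0 by simp
      have "real k0 \<le> (1 - \<epsilon>) * L" unfolding k0_def by (rule of_nat_floor[OF h])
      also have "\<dots> \<le> L" using h2 by (simp add: algebra_simps)
      finally show ?thesis .
    qed
    have k0L2: "(1 - \<epsilon>) * L - 1 \<le> real k0" unfolding k0_def using L0 \<epsilon>0
      real_of_int_floor_gt_diff_one[of "(1 - \<epsilon>) * L"] by (simp add: of_nat_nat)
    have Kbound: "real k0 * C ^ 2 / (\<delta>0 * N)^2 \<le> \<epsilon> / 2"
    proof -
      have "real k0 * C ^ 2 / (\<delta>0 * N)^2 \<le> L * C ^ 2 / (\<delta>0 * N)^2"
        using k0L by (intro divide_right_mono mult_right_mono) auto
      also have "\<dots> = lam * C / (\<delta>0^2 * N)" unfolding L_def using N0 C1 d0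
        by (simp add: field_simps power2_eq_square)
      also have "\<dots> \<le> \<epsilon> / 2"
      proof -
        have "2 * lam * C / (\<delta>0^2 * \<epsilon>) \<le> N" using B(4) NB by simp
        then have "2 * lam * C \<le> N * (\<delta>0^2 * \<epsilon>)" using \<epsilon>0 d0 by (simp add: pos_divide_le_eq)
        then show ?thesis using N0 d0 by (simp add: pos_divide_le_eq algebra_simps)
      qed
      finally show ?thesis .
    qed
    have invL: "1 \<le> \<epsilon> / 2 * L"
    proof -
      have "2 * C / (\<epsilon> * lam) \<le> N" using B(3) NB by simp
      then have "2 * C \<le> N * (\<epsilon> * lam)" using \<epsilon>0 lam0 by (simp add: pos_divide_le_eq)
      then show ?thesis unfolding L_def using C1 by (simp add: pos_le_divide_eq algebra_simps)
    qed
    have lo: "(1 - 2 * \<epsilon>) * L \<le> E"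
    proof -
      have "(1 - 2 * \<epsilon>) * L \<le> (1 - 3 / 2 * \<epsilon>) * L * (1 - \<epsilon> / 2)"
      proof -
        have "(1 - 2 * \<epsilon>) \<le> (1 - 3 / 2 * \<epsilon>) * (1 - \<epsilon> / 2)" by (simp add: algebra_simps)
        then show ?thesis using L0 by (metis mult.commute mult.left_commute mult_right_mono less_imp_le)
      qed
      also have "\<dots> \<le> ((1 - \<epsilon>) * L - 1) * (1 - \<epsilon> / 2)"
        using invL \<epsilon>0 by (intro mult_right_mono) (auto simp: algebra_simps)
      also have "\<dots> \<le> real k0 * (1 - \<epsilon> / 2)"
        using k0L2 \<epsilon>0 by (intro mult_right_mono) auto
      also have "\<dots> \<le> real k0 * (1 - real k0 * C ^ 2 / (\<delta>0 * N)^2)"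
        using Kbound by (intro mult_left_mono) auto
      finally show ?thesis using lo0 by linarith
    qed
    have "E / L \<le> 1 + 2 * \<epsilon>" using up L0 by (simp add: pos_divide_le_eq)
    moreover have "1 - 2 * \<epsilon> \<le> E / L" using lo L0 by (simp add: pos_le_divide_eq)
    ultimately have "\<bar>E / L - 1\<bar> < e" using \<epsilon>0 e by auto
    then show "norm (enn2real (expected_T n r s \<alpha>) / (real (n choose s) * ln (1 / \<alpha>) / real (r choose s)) - 1) < e"
      unfolding E_def L_def N_def C_def lam_def by simp
  qed
qed



end
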